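(* Let $\phi,\psi$ be seeds with $parent(\psi)=\phi$ and let $i\in\{1,\dots,n-3\}$. Then $\psi=son(\phi,i)$ if and only if $ord(\psi)=i$.
   Context: Fix an integer $n\ge 5$. An $n$-permutation is a sequence $(a_1,\dots,a_n)$ of the distinct elements of $\{1,\dots,n\}$. For $\pi=(a_1,\dots,a_n)$ put $\sigma(\pi)=(a_2,\dots,a_n,a_1)$; $\sigma^i$ is $\sigma$ applied $i$ times. On $\{1,\dots,n-1\}$ let $a\oplus 1=a+1$ for $a<n-1$ and $(n-1)\oplus 1=1$. A seed is an $(n-1)$-tuple $\psi=(a_1,\dots,a_{n-1})$ of distinct elements of $\{1,\dots,n\}$ with $a_1=n$ and $a_2\oplus1\notin\{a_1,\dots,a_{n-1}\}$; its missing element is $mis(\psi)=a_2\oplus 1$. The package $perms(\psi)$ is the set of all $n$-permutations obtained from $\psi$ by inserting $mis(\psi)$ at any position and then applying any cyclic rotation. Seeds $\phi,\psi$ are neighbors if $perms(\phi)\cap perms(\psi)\neq\emptyset$. For a seed $\psi=(a_1,\dots,a_{n-1})$ with $x=mis(\psi)$: $height(\psi)$ is the largest $k\in\{1,\dots,n-2\}$ such that $a_i=a_{i+1}\oplus 1$ for all $2\le i\le k$; $\widetilde\psi=(a_1,x,a_2,\dots,a_{n-1})$; for $1\le i\le n-1$, $\psi^{(i)}=(x,c_1,\dots,c_{n-1})$ where $(c_1,\dots,c_{n-1})$ is $\psi$ cyclically rotated to the right by $i-1$ positions. For distinct neighboring seeds $\beta,\psi$ we write $parent(\beta)=\psi$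 if $height(\psi)>1$ and $mis(\psi)=mis(\beta)\oplus 1$; if moreover $\sigma^i(\psi^{(i)})=\widetilde\beta$ we write $son(\psi,i)=\beta$. For a seed $\psi$, $ord(\psi)$ is the position of the entry $mis(\psi)\oplus 1$ in $\psi$ counted from the right end (the last entry of $\psi$ has position $1$). *)

theory Defs
  imports Main
begin

text \<open>Permutations and seeds are represented as lists of naturals (1-based in the paper,
  0-based list indices here). The parameter n is the fixed integer of the paper.\<close>

definition oplus1 :: "nat \<Rightarrow> nat \<Rightarrow> nat" where
  "oplus1 n a = (if a < n - 1 then a + 1 else 1)"

definition is_perm :: "nat \<Rightarrow> nat list \<Rightarrow> bool" where
  "is_perm n p \<longleftrightarrow> length p = n \<and> distinct p \<and> set p = {1..n}"

definition sigma :: "nat list \<Rightarrow> nat list" where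
  "sigma p = rotate1 p"

definition mis :: "nat \<Rightarrow> nat list \<Rightarrow> nat" where
  "mis n psi = oplus1 n (psi ! 1)"

definition seed :: "nat \<Rightarrow> nat list \<Rightarrow> bool" where
  "seed n psi \<longleftrightarrow> length psi = n - 1 \<and> distinct psi \<and> set psi \<subseteq> {1..n}
     \<and> psi ! 0 = n \<and> mis n psi \<notin> set psi"

definition perms :: "nat \<Rightarrow> nat list \<Rightarrow> nat list set" where
  "perms n psi = {(sigma ^^ k) (take j psi @ [mis n psi] @ drop j psi) | j k. j \<le> length psi}"

definition neighbors :: "nat \<Rightarrow> nat list \<Rightarrow> nat list \<Rightarrow> bool" where
  "neighbors n phi psi \<longleftrightarrow> perms n phi \<inter> perms n psi \<noteq> {}"

text \<open>height: largest k in {1..n-2} with a_i = a_{i+1} (+) 1 for all 2 <= i <= k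
  (1-based a_i = psi ! (i-1)).\<close>
definition height :: "nat \<Rightarrow> nat list \<Rightarrow> nat" where
  "height n psi = Max {k \<in> {1..n-2}. \<forall>i. 2 \<le> i \<and> i \<le> k \<longrightarrow> psi ! (i - 1) = oplus1 n (psi ! i)}"

definition tilde :: "nat \<Rightarrow> nat list \<Rightarrow> nat list" where
  "tilde n psi = hd psi # mis n psi # tl psi"

definition rotr :: "nat \<Rightarrow> 'a list \<Rightarrow> 'a list" where
  "rotr m xs = rev (rotate m (rev xs))"

definition sup_i :: "nat \<Rightarrow> nat list \<Rightarrow> nat \<Rightarrow> nat list" where
  "sup_i n psi i = mis n psi # rotr (i - 1) psi"

text \<open>parent n beta psi  means  parent(beta) = psi.\<close>
definition parent :: "nat \<Rightarrow> nat list \<Rightarrow> nat list \<Rightarrow> bool" where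
  "parent n beta psi \<longleftrightarrow> seed n beta \<and> seed n psi \<and> beta \<noteq> psi \<and> neighbors n beta psi
     \<and> height n psi > 1 \<and> mis n psi = oplus1 n (mis n beta)"

text \<open>son n psi i beta  means  son(psi, i) = beta.\<close>
definition son :: "nat \<Rightarrow> nat list \<Rightarrow> nat \<Rightarrow> nat list \<Rightarrow> bool" where
  "son n psi i beta \<longleftrightarrow> parent n beta psi \<and> (sigma ^^ i) (sup_i n psi i) = tilde n beta"

text \<open>ord: position of mis(psi) (+) 1 in psi counted from the right (last entry = 1).\<close>
definition ord :: "nat \<Rightarrow> nat list \<Rightarrow> nat" where
  "ord n psi = (THE p. 1 \<le> p \<and> p \<le> length psi \<and> psi ! (length psi - p) = oplus1 n (mis n psi))"

end

theory Submission imports Defs begin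

lemma oplus1_range: "n \<ge> 3 \<Longrightarrow> oplus1 n a \<in> {1..n-1}"
  by (auto simp: oplus1_def)

lemma oplus1_inj: "a \<in> {1..n-1} \<Longrightarrow> b \<in> {1..n-1} \<Longrightarrow> oplus1 n a = oplus1 n b \<Longrightarrow> a = b"
  unfolding oplus1_def by (cases "a < n - 1"; cases "b < n - 1") auto

lemma rot_eq_hd:
  assumes "distinct A" "A \<noteq> []" "hd (rotate k A) = hd A"
  shows "rotate k A = A"
proof -
  have "A ! (k mod length A) = hd (rotate k A)"
    using assms(2) by (simp add: hd_rotate_conv_nth)
  also have "\<dots> = A ! 0" by (metis assms(2,3) hd_conv_nth)
  finally have "A ! (k mod length A) = A ! 0" .
  then have "k mod length A = 0"
    using assms by (simp add: nth_eq_iff_index_eq)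
  then show ?thesis by (metis rotate_conv_mod rotate0 id_apply)
qed

lemma rotate_inv: "\<exists>s. rotate s (rotate k xs) = xs"
proof (cases "xs = []")
  case True then show ?thesis by simp
next
  case False
  let ?l = "length xs"
  have h1: "k mod ?l < ?l" using False by simp
  have h2: "k = k mod ?l + ?l * (k div ?l)" by simp
  have "?l - k mod ?l + k = ?l + ?l * (k div ?l)" using h1 h2 by linarith
  then have "?l - k mod ?l + k = ?l * Suc (k div ?l)" by simp
  then have "(?l - k mod ?l + k) mod ?l = 0" by simp
  then show ?thesis
    by (metis rotate_rotate rotate_conv_mod rotate0 id_apply)
qed

lemma normalize:
  assumes "phi \<noteq> []" "phi ! 0 = n" "j \<le> length phi"
  shows "\<exists>p t. rotate t (take j phi @ x # drop j phi) = n # take p (tl phi) @ x # drop p (tl phi)"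
proof -
  obtain T where T: "phi = n # T" using assms by (cases phi) auto
  show ?thesis
  proof (cases j)
    case 0
    have "rotate 1 (take j phi @ x # drop j phi) = n # take (length (tl phi)) (tl phi) @ x # drop (length (tl phi)) (tl phi)"
      using 0 T by simp
    then show ?thesis by blast
  next
    case (Suc j0)
    have "rotate 0 (take j phi @ x # drop j phi) = n # take j0 (tl phi) @ x # drop j0 (tl phi)"
      using Suc T by simp
    then show ?thesis by blast
  qed
qed

lemma rotr_split: "k \<le> length xs \<Longrightarrow> rotr k xs = drop (length xs - k) xs @ take (length xs - k) xs"
  unfolding rotr_def by (cases "k = length xs") (simp_all add: rotate_drop_take take_rev drop_rev)

lemma ins_eq:
  assumes "x \<notin> set D" "m \<le> length D" "r \<le> length D"
    "take m D @ x # drop m D = take r D @ x # drop r D"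
  shows "m = r"
proof (rule ccontr)
  assume "m \<noteq> r"
  then consider "m < r" | "r < m" by linarith
  then show False
  proof cases
    case 1
    have "(take m D @ x # drop m D) ! m = x" using assms(2) by (simp add: nth_append)
    then have "(take r D @ x # drop r D) ! m = x" using assms(4) by simp
    moreover have "(take r D @ x # drop r D) ! m = D ! m" using assms(3) 1 by (simp add: nth_append)
    ultimately show False using assms 1 by (metis nth_mem order_less_le_trans)
  next
    case 2
    have "(take r D @ x # drop r D) ! r = x" using assms(3) by (simp add: nth_append)
    then have "(take m D @ x # drop m D) ! r = x" using assms(4) by simp
    moreover have "(take m D @ x # drop m D) ! r = D ! r" using assms(2) 2 by (simp add: nth_append)
    ultimately show False using assms 2 by (metis nth_mem order_less_le_trans)
  qed
qed


lemma distinct_ins: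
  assumes "distinct xs" "x \<notin> set xs"
  shows "distinct (take j xs @ x # drop j xs)"
proof -
  have "set (take j xs) \<inter> set (drop j xs) = {}"
    using assms(1) by (rule set_take_disj_set_drop_if_distinct) simp
  moreover have "x \<notin> set (take j xs)" "x \<notin> set (drop j xs)"
    using assms(2) by (auto dest: in_set_takeD in_set_dropD)
  ultimately show ?thesis using assms(1) by (auto simp: distinct_append)
qed

lemma sigma_pow: "(sigma ^^ k) = rotate k"
proof -
  have sig: "sigma = rotate1" by (rule ext) (simp add: sigma_def)
  show ?thesis by (simp add: sig rotate_def)
qed

theorem mainTheorem4:
  fixes n i :: nat and phi psi :: "nat list"
  assumes "n \<ge> 5"
    and "seed n phi" and "seed n psi"
    and "parent n psi phi"
    and "1 \<le> i" and "i \<le> n - 3"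
  shows "son n phi i psi \<longleftrightarrow> ord n psi = i"
proof -
  define x where "x = mis n phi"
  define y where "y = mis n psi"
  have lphi: "length phi = n - 1" and dphi: "distinct phi" and sphi: "set phi \<subseteq> {1..n}"
    and h0: "phi ! 0 = n" and xn: "x \<notin> set phi"
    using assms(2) by (auto simp: seed_def x_def)
  have lpsi: "length psi = n - 1" and dpsi: "distinct psi" and spsi: "set psi \<subseteq> {1..n}"
    and h0': "psi ! 0 = n" and yn: "y \<notin> set psi"
    using assms(3) by (auto simp: seed_def y_def)
  obtain a D2 where phiD: "phi = n # a # D2"
    using lphi h0 assms(1)
    by (cases phi; cases "tl phi") auto
  have lD2: "length D2 = n - 3" using lphi phiD by simp
  have D2ne: "D2 \<noteq> []" using lD2 assms(1) by auto
  obtain T where psiT: "psi = n # T" using lpsi h0' assms(1) by (cases psi) auto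
  have xa: "x = oplus1 n a" using phiD by (simp add: x_def mis_def)
  have xy: "x = oplus1 n y" using assms(4) unfolding parent_def x_def y_def by blast
  have arange: "a \<in> {1..n-1}"
  proof -
    have "a \<in> {1..n}" using sphi phiD by auto
    moreover have "a \<noteq> n" using dphi phiD by auto
    ultimately show ?thesis by auto
  qed
  have yrange: "y \<in> {1..n-1}" unfolding y_def mis_def using assms(1) by (intro oplus1_range) simp
  have ya: "y = a" using oplus1_inj[OF yrange arange] xa xy by simp
  have xrange: "x \<in> {1..n-1}" unfolding x_def mis_def using assms(1) by (intro oplus1_range) simp
  define S where "S = {k \<in> {1..n-2}. \<forall>i. 2 \<le> i \<and> i \<le> k \<longrightarrow> phi ! (i - 1) = oplus1 n (phi ! i)}"
  have "1 \<in> S" using assms(1) by (auto simp: S_def)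
  moreover have "finite S" by (simp add: S_def)
  ultimately have "Max S \<in> S" by (intro Max_in) auto
  then have P: "\<forall>i. 2 \<le> i \<and> i \<le> Max S \<longrightarrow> phi ! (i - 1) = oplus1 n (phi ! i)"
    unfolding S_def by blast
  have "height n phi > 1" using assms(4) unfolding parent_def by blast
  then have "Max S > 1" unfolding height_def S_def .
  then have "2 \<le> Max S" by simp
  then have "phi ! (2 - 1) = oplus1 n (phi ! 2)" using P by blast
  then have "phi ! 1 = oplus1 n (phi ! 2)" by simp
  then have aD: "a = oplus1 n (hd D2)" using phiD D2ne by (cases D2) auto
  have hdrange: "hd D2 \<in> {1..n-1}"
  proof -
    have "hd D2 \<in> set phi" using phiD D2ne by auto
    then have "hd D2 \<in> {1..n}" using sphi by auto
    moreover have "hd D2 \<noteq> n" using dphi phiD D2ne by (cases D2) auto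
    ultimately show ?thesis by auto
  qed
  have xD2: "x \<notin> set D2" using xn phiD by auto
  have yD2: "y \<notin> set D2" using dphi phiD ya by auto
  have xney: "x \<noteq> y" using xn phiD ya by auto
  have p1: "psi ! 1 \<noteq> x"
  proof -
    have "y = oplus1 n (psi ! 1)" by (simp add: y_def mis_def)
    have r1: "psi ! 1 \<in> {1..n-1}"
    proof -
      have "psi ! 1 \<in> set psi" using lpsi assms(1) by simp
      then have "psi ! 1 \<in> {1..n}" using spsi by auto
      moreover have "psi ! 1 \<noteq> n" using dpsi psiT lpsi assms(1)
        by (cases T) auto
      ultimately show ?thesis by auto
    qed
    have "psi ! 1 = hd D2"
      using oplus1_inj[OF r1 hdrange] \<open>y = oplus1 n (psi ! 1)\<close> ya aD by simp
    then show ?thesis using xD2 D2ne by auto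
  qed
  obtain q where "q \<in> perms n phi" "q \<in> perms n psi"
    using assms(4) by (auto simp: parent_def neighbors_def)
  then obtain j k j' k' where jk: "j \<le> length phi" "j' \<le> length psi"
    and eqr: "rotate k (take j phi @ x # drop j phi) = rotate k' (take j' psi @ y # drop j' psi)"
    by (auto simp: perms_def sigma_pow x_def y_def)
  define A where "A = take j phi @ x # drop j phi"
  define B where "B = take j' psi @ y # drop j' psi"
  obtain p t1 where At: "rotate t1 A = n # take p (tl phi) @ x # drop p (tl phi)"
    using normalize[of phi n j x] phiD jk unfolding A_def by auto
  obtain q t2 where Bt: "rotate t2 B = n # take q (tl psi) @ y # drop q (tl psi)"
    using normalize[of psi n j' y] psiT jk h0' unfolding B_def by auto
  define A' where "A' = rotate t1 A"
  define B' where "B' = rotate t2 B"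
  obtain s1 where s1: "rotate s1 (rotate k A) = A" using rotate_inv by blast
  obtain s2 where s2: "rotate s2 (rotate t2 B) = B" using rotate_inv by blast
  have eqr': "rotate k A = rotate k' B" using eqr unfolding A_def B_def .
  have AB: "A = rotate s1 (rotate k' B)" using s1 eqr' by simp
  have BB: "B = rotate s2 B'" using s2 unfolding B'_def by simp
  have AB': "A' = rotate (t1 + s1 + k' + s2) B'"
    unfolding A'_def using AB BB by (simp add: rotate_rotate add.assoc)
  have dB': "distinct B'" unfolding B'_def B_def using distinct_ins[OF dpsi yn] by (simp only: distinct_rotate)
  moreover have "B' \<noteq> []" unfolding B'_def B_def by simp
  moreover have "hd (rotate (t1 + s1 + k' + s2) B') = hd B'"
  proof -
    have "hd (rotate (t1 + s1 + k' + s2) B') = hd A'" using AB' by simp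
    also have "\<dots> = n" using At unfolding A'_def by simp
    also have "\<dots> = hd B'" using Bt unfolding B'_def by simp
    finally show ?thesis .
  qed
  ultimately have "rotate (t1 + s1 + k' + s2) B' = B'" by (rule rot_eq_hd)
  then have "A' = B'" using AB' by simp
  then have E: "take p (tl phi) @ x # drop p (tl phi) = take q (tl psi) @ y # drop q (tl psi)"
    using At Bt unfolding A'_def B'_def by simp
  have ytl: "y \<notin> set (tl psi)" using yn psiT by auto
  have "removeAll y (take q (tl psi)) = take q (tl psi)" using ytl by (meson in_set_takeD removeAll_id)
  moreover have "removeAll y (drop q (tl psi)) = drop q (tl psi)" using ytl by (meson in_set_dropD removeAll_id)
  ultimately have "removeAll y (take q (tl psi) @ y # drop q (tl psi)) = tl psi"
    by simp
  then have rem: "removeAll y (take p (tl phi) @ x # drop p (tl phi)) = tl psi" using E by simp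
  obtain m where m: "m \<le> length D2" "psi = n # take m D2 @ x # drop m D2"
  proof (cases p)
    case 0
    then have "tl psi = x # D2" using rem phiD ya xney yD2 by simp
    then have "psi ! 1 = x" using psiT by simp
    then show ?thesis using p1 by simp
  next
    case (Suc m0)
    have "removeAll y (take m0 D2) = take m0 D2" using yD2 by (meson in_set_takeD removeAll_id)
    moreover have "removeAll y (drop m0 D2) = drop m0 D2" using yD2 by (meson in_set_dropD removeAll_id)
    ultimately have "tl psi = take m0 D2 @ x # drop m0 D2" using rem phiD ya xney Suc by simp
    then have "psi = n # take (min m0 (length D2)) D2 @ x # drop (min m0 (length D2)) D2"
      using psiT by (simp add: min_def)
    moreover have "min m0 (length D2) \<le> length D2" by simp
    ultimately show ?thesis using that by blast
  qed
  have m1: "m \<noteq> 0" using p1 m by (cases m) auto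
  define r where "r = n - i - 2"
  have r: "r \<le> length D2" "1 \<le> r" using assms lD2 by (auto simp: r_def)
  have rot: "rotr (i - 1) phi = drop (n - i) phi @ take (n - i) phi"
    using rotr_split[of "i - 1" phi] lphi assms by simp
  have "(sigma ^^ i) (sup_i n phi i) = rotate i ((x # drop (n - i) phi) @ take (n - i) phi)"
    unfolding sigma_pow sup_i_def rot x_def by simp
  also have "\<dots> = take (n - i) phi @ x # drop (n - i) phi"
    using rotate_append[of "x # drop (n - i) phi" "take (n - i) phi"] lphi assms by simp
  also have "\<dots> = n # a # take r D2 @ x # drop r D2"
  proof -
    have "n - i = Suc (Suc r)" using assms by (simp add: r_def)
    then show ?thesis using phiD by simp
  qed
  finally have sonL: "(sigma ^^ i) (sup_i n phi i) = n # a # take r D2 @ x # drop r D2" .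
  have tl_psi: "tilde n psi = n # a # take m D2 @ x # drop m D2"
    using m ya by (simp add: tilde_def y_def)
  have son_iff: "son n phi i psi \<longleftrightarrow> m = r"
  proof -
    have "son n phi i psi \<longleftrightarrow> take r D2 @ x # drop r D2 = take m D2 @ x # drop m D2"
      using assms(4) sonL tl_psi by (simp add: son_def)
    also have "\<dots> \<longleftrightarrow> m = r" using ins_eq[OF xD2 r(1) m(1)] by auto
    finally show ?thesis .
  qed
  have oy: "oplus1 n (mis n psi) = x" using xy y_def by simp
  have psim: "psi ! (m + 1) = x" using m by (simp add: nth_append)
  have ordv: "ord n psi = n - 2 - m"
    unfolding ord_def oy
  proof (rule the_equality)
    show "1 \<le> n - 2 - m \<and> n - 2 - m \<le> length psi \<and> psi ! (length psi - (n - 2 - m)) = x"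
      using m lD2 lpsi psim assms(1) by auto
  next
    fix p assume H: "1 \<le> p \<and> p \<le> length psi \<and> psi ! (length psi - p) = x"
    have "length psi - p = m + 1"
      using nth_eq_iff_index_eq[OF dpsi, of "length psi - p" "m + 1"] H psim m lD2 lpsi assms(1) by auto
    then show "p = n - 2 - m" using H lpsi by auto
  qed
  have "m = r \<longleftrightarrow> n - 2 - m = i" using m(1) lD2 assms(1,5,6) unfolding r_def by linarith
  then show ?thesis using son_iff ordv by simp
qed

end
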